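(* Let $M=[a_{pq},b_{pq}]_{p=1,\dots,n;\,q=1,\dots,m}$ be a 2-person normal form game matrix, and fix $i\in\{1,\dots,n\}$ and $j\in\{1,\dots,m\}$. Let $x_1,\dots,x_m$ and $y_1,\dots,y_n$ be real numbers with $x_j=y_i$. Then there exists a unique 2-person normal form game matrix $\widehat M=[\hat a_{pq},\hat b_{pq}]$ of dimensions $n\times m$ such that $\widehat M$ can be obtained from $M$ by an OI-transformation, $\hat a_{iq}=x_q$ for all $q\le m$, and $\hat a_{pj}=y_p$ for all $p\le n$.
   Context: A 2-person normal form game matrix of dimensions $n\times m$ is $M=[a_{ij},b_{ij}]_{i\le n,\,j\le m}$, where $(a_{ij},b_{ij})\in\mathbb{R}^2$ are the payoffs of the row player $A$ and column player $B$ when $A$ plays strategy $A_i$ and $B$ plays $B_j$. A preplay offer by $A$ to $B$ of amount $\delta\ge 0$ contingent on $B_j$ replaces $(a_{ij},b_{ij})$ by $(a_{ij}-\delta,b_{ij}+\delta)$ for every $i$ (other entries unchanged); a preplay offer by $B$ to $A$ of amount $\delta\ge0$ contingent on $A_i$ replaces $(a_{ij},b_{ij})$ by $(a_{ij}+\delta,b_{ij}-\delta)$ for every $j$. Each such map is a POI-transformation; an OI-transformation is a composition of finitely many POI-transformations (all amounts non-negative). *)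

theory Defs
  imports Complex_Main
begin

text \<open>A 2-person normal form game matrix with row strategies indexed by the finite
type 'r (n = CARD('r)) and column strategies indexed by the finite type 'c
(m = CARD('c)); entry M p q = (a_pq, b_pq).\<close>
type_synonym ('r, 'c) game = "'r \<Rightarrow> 'c \<Rightarrow> real \<times> real"

definition offer_A :: "'c \<Rightarrow> real \<Rightarrow> ('r, 'c) game \<Rightarrow> ('r, 'c) game" where
  "offer_A j d M = (\<lambda>p q. if q = j then (fst (M p q) - d, snd (M p q) + d) else M p q)"

definition offer_B :: "'r \<Rightarrow> real \<Rightarrow> ('r, 'c) game \<Rightarrow> ('r, 'c) game" where
  "offer_B i d M = (\<lambda>p q. if p = i then (fst (M p q) + d, snd (M p q) - d) else M p q)"

definition POI :: "('r, 'c) game \<Rightarrow> ('r, 'c) game \<Rightarrow> bool" where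
  "POI M M' \<longleftrightarrow> (\<exists>j d. d \<ge> 0 \<and> M' = offer_A j d M) \<or> (\<exists>i d. d \<ge> 0 \<and> M' = offer_B i d M)"

definition OI :: "('r, 'c) game \<Rightarrow> ('r, 'c) game \<Rightarrow> bool" where
  "OI M M' \<longleftrightarrow> POI\<^sup>*\<^sup>* M M'"

end

theory Submission
  imports Defs
begin

definition NF :: "('r, 'c) game \<Rightarrow> ('c \<Rightarrow> real) \<Rightarrow> ('r \<Rightarrow> real) \<Rightarrow> ('r, 'c) game" where
  "NF M a b = (\<lambda>p q. (fst (M p q) - a q + b p, snd (M p q) + a q - b p))"

lemma NF_00: "NF M (\<lambda>_. 0) (\<lambda>_. 0) = M"
  by (simp add: NF_def)

lemma POI_form: "POI (NF M a b) M' \<Longrightarrow> \<exists>a' b'. M' = NF M a' b'"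
  unfolding POI_def
proof (elim disjE exE conjE)
  fix j d assume "M' = offer_A j d (NF M a b)"
  then have "M' = NF M (\<lambda>q. a q + (if q = j then d else 0)) b"
    by (auto simp: offer_A_def NF_def fun_eq_iff)
  then show ?thesis by blast
next
  fix i d assume "M' = offer_B i d (NF M a b)"
  then have "M' = NF M a (\<lambda>p. b p + (if p = i then d else 0))"
    by (auto simp: offer_B_def NF_def fun_eq_iff)
  then show ?thesis by blast
qed

lemma OI_form: "OI M M' \<Longrightarrow> \<exists>a b. M' = NF M a b"
  unfolding OI_def
proof (induction rule: rtranclp_induct)
  case base
  then show ?case using NF_00 by metis
next
  case (step y z)
  then show ?case using POI_form by metis
qed

lemma cols: "finite S \<Longrightarrow> \<forall>q. d q \<ge> 0 \<Longrightarrow>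
  POI\<^sup>*\<^sup>* (NF M a b) (NF M (\<lambda>q. a q + (if q \<in> S then d q else 0)) b)"
proof (induction S rule: finite_induct)
  case empty
  then show ?case by simp
next
  case (insert j S)
  let ?a = "\<lambda>q. a q + (if q \<in> S then d q else 0)"
  have "POI (NF M ?a b) (offer_A j (d j) (NF M ?a b))"
    unfolding POI_def using insert.prems by blast
  moreover have "offer_A j (d j) (NF M ?a b) = NF M (\<lambda>q. a q + (if q \<in> insert j S then d q else 0)) b"
    using insert by (auto simp: offer_A_def NF_def fun_eq_iff)
  ultimately show ?case using insert
    by (metis (no_types, lifting) rtranclp.rtrancl_into_rtrancl)
qed

lemma rows: "finite S \<Longrightarrow> \<forall>p. d p \<ge> 0 \<Longrightarrow>
  POI\<^sup>*\<^sup>* (NF M a b) (NF M a (\<lambda>p. b p + (if p \<in> S then d p else 0)))"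
proof (induction S rule: finite_induct)
  case empty
  then show ?case by simp
next
  case (insert i S)
  let ?b = "\<lambda>p. b p + (if p \<in> S then d p else 0)"
  have "POI (NF M a ?b) (offer_B i (d i) (NF M a ?b))"
    unfolding POI_def using insert.prems by blast
  moreover have "offer_B i (d i) (NF M a ?b) = NF M a (\<lambda>p. b p + (if p \<in> insert i S then d p else 0))"
    using insert by (auto simp: offer_B_def NF_def fun_eq_iff)
  ultimately show ?case using insert
    by (metis (no_types, lifting) rtranclp.rtrancl_into_rtrancl)
qed

lemma OI_NF:
  fixes M :: "('r::finite, 'c::finite) game"
  assumes "\<forall>q. a q \<ge> 0" "\<forall>p. b p \<ge> 0"
  shows "OI M (NF M a b)"
proof -
  have 1: "POI\<^sup>*\<^sup>* (NF M (\<lambda>_. 0) (\<lambda>_. 0)) (NF M a (\<lambda>_. 0))"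
    using cols[of UNIV a M "\<lambda>_. 0" "\<lambda>_. 0"] assms by simp
  have 2: "POI\<^sup>*\<^sup>* (NF M a (\<lambda>_. 0)) (NF M a b)"
    using rows[of UNIV b M a "\<lambda>_. 0"] assms by simp
  show ?thesis using 1 2 NF_00[of M] unfolding OI_def by simp
qed

lemma le_sum_abs:
  fixes f :: "'a::finite \<Rightarrow> real"
  shows "\<bar>f k\<bar> \<le> (\<Sum>q\<in>UNIV. \<bar>f q\<bar>)"
  by (rule member_le_sum) auto

theorem theorem2:
  fixes M :: "('r::finite, 'c::finite) game"
    and i :: 'r and j :: 'c
    and x :: "'c \<Rightarrow> real" and y :: "'r \<Rightarrow> real"
  assumes "x j = y i"
  shows "\<exists>!Mh :: ('r, 'c) game. OI M Mh \<and> (\<forall>q. fst (Mh i q) = x q) \<and> (\<forall>p. fst (Mh p j) = y p)"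
proof -
  define f where "f q = fst (M i q) - x q" for q
  define g where "g p = y p - fst (M p j) + fst (M i j) - x j" for p
  define t where "t = (\<Sum>q\<in>UNIV. \<bar>f q\<bar>) + (\<Sum>p\<in>UNIV. \<bar>g p\<bar>)"
  have fa: "\<bar>f q\<bar> \<le> t" for q
    using le_sum_abs[of f q] sum_nonneg[of UNIV "\<lambda>p. \<bar>g p\<bar>"] unfolding t_def by linarith
  have ga: "\<bar>g p\<bar> \<le> t" for p
    using le_sum_abs[of g p] sum_nonneg[of UNIV "\<lambda>q. \<bar>f q\<bar>"] unfolding t_def by linarith
  define a where "a q = f q + t" for q
  define b where "b p = g p + t" for p
  have a0: "\<forall>q. a q \<ge> 0" unfolding a_def using fa by (smt (verit))
  have b0: "\<forall>p. b p \<ge> 0" unfolding b_def using ga by (smt (verit))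
  have ex: "OI M (NF M a b) \<and> (\<forall>q. fst (NF M a b i q) = x q) \<and> (\<forall>p. fst (NF M a b p j) = y p)"
    using OI_NF[OF a0 b0] assms by (auto simp: NF_def a_def b_def f_def g_def)
  define F where "F = (\<lambda>p q. (fst (M p q) + x q - fst (M i q) + y p - fst (M p j) + fst (M i j) - x j,
      snd (M p q) - (x q - fst (M i q) + y p - fst (M p j) + fst (M i j) - x j)))"
  have un: "Mh = F" if H: "OI M Mh" "\<forall>q. fst (Mh i q) = x q" "\<forall>p. fst (Mh p j) = y p" for Mh
  proof -
    obtain a' b' where e: "Mh = NF M a' b'" using OI_form H(1) by blast
    have h1: "fst (M i q) - a' q + b' i = x q" for q using H(2) e by (simp add: NF_def)
    have h2: "fst (M p j) - a' j + b' p = y p" for p using H(3) e by (simp add: NF_def)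
    have h3: "fst (M i j) - a' j + b' i = x j" using h1[of j] .
    show ?thesis unfolding e F_def NF_def fun_eq_iff
    proof (intro allI)
      fix p q
      have "- a' q + b' p = x q - fst (M i q) + y p - fst (M p j) + fst (M i j) - x j"
        using h1[of q] h2[of p] h3 by linarith
      then have E: "- a' q + b' p = x q - fst (M i q) + y p - fst (M p j) + fst (M i j) - x j" .
      have c1: "fst (M p q) - a' q + b' p = fst (M p q) + x q - fst (M i q) + y p - fst (M p j) + fst (M i j) - x j"
        using E by linarith
      have c2: "snd (M p q) + a' q - b' p = snd (M p q) - (x q - fst (M i q) + y p - fst (M p j) + fst (M i j) - x j)"
        using E by linarith
      show "(fst (M p q) - a' q + b' p, snd (M p q) + a' q - b' p) =
        (fst (M p q) + x q - fst (M i q) + y p - fst (M p j) + fst (M i j) - x j,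
         snd (M p q) - (x q - fst (M i q) + y p - fst (M p j) + fst (M i j) - x j))"
        unfolding c1 c2 by (rule refl)
    qed
  qed
  show ?thesis
  proof (rule ex1I[of _ "NF M a b"])
    show "OI M (NF M a b) \<and> (\<forall>q. fst (NF M a b i q) = x q) \<and> (\<forall>p. fst (NF M a b p j) = y p)"
      using ex .
  next
    fix Mh assume A: "OI M Mh \<and> (\<forall>q. fst (Mh i q) = x q) \<and> (\<forall>p. fst (Mh p j) = y p)"
    have "Mh = F" using un A by blast
    moreover have "NF M a b = F" using un ex by blast
    ultimately show "Mh = NF M a b" by simp
  qed
qed

end
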